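(* Let $n,M\ge1$ be integers, $\mathcal X=\{x^{(1)},\dots,x^{(L)}\}\subset\mathbb C$ a set of $L$ channel input symbols, $\sigma^2>0$, $g:\mathbb C\to[0,+\infty]$ measurable, $\epsilon>0$, $B,\delta\in\mathbb R$. Let $\mathscr C$ be a homogeneous $(n,M,\epsilon,B,\delta)$-code (as defined in the context), let $p_\ell=\int_{\mathcal E_\ell}f_{Y|X}(y|x^{(\ell)})dy$, assume $\sum_jp_j>0$, let $Q(x^{(\ell)})=p_\ell/\sum_{j=1}^Lp_j$, and assume $P_{\mathscr C}=Q$. Then $$\epsilon\ge1-\exp\Big(-nH(Q)+n\log\sum_{j=1}^Lp_j\Big).$$
   Context: Channel: outputs $\boldsymbol Y=\boldsymbol x+\boldsymbol N_1$, $\boldsymbol Z=\boldsymbol x+\boldsymbol N_2$, all noise components i.i.d. complex circularly symmetric Gaussian with real and imaginary parts of zero mean and variance $\sigma^2/2$; $f_{Y|X}(y|x)=\frac1{\pi\sigma^2}\exp(-|y-x|^2/\sigma^2)$, $f_{\boldsymbol Y|\boldsymbol X}(\boldsymbol y|\boldsymbol x)=\prod_tf_{Y|X}(y_t|x_t)$ (same for $\boldsymbol Z$). An $(n,M)$-code is $\mathscr C=\{(\boldsymbol u(i),\mathcal D_i)\}_{i=1}^M$ with $\boldsymbol u(i)\in\mathcal X^n$, $|u_t(i)|\le P$ for a fixed $P>0$, pairwise disjoint measurable $\mathcal D_i\subseteq\mathbb C^n$, $M\le2^{n\lfloor\log_2L\rfloor}$; decoding sets are of product form $\mathcal D_i=\mathcal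 D_{i,1}\times\cdots\times\mathcal D_{i,n}$, $\mathcal D_{i,t}\subseteq\mathbb C$ measurable. $\gamma_i(\mathscr C)=1-\int_{\mathcal D_i}f_{\boldsymbol Y|\boldsymbol X}(\boldsymbol y|\boldsymbol u(i))d\boldsymbol y$, $\gamma=\frac1M\sum_i\gamma_i$; $(n,M,\epsilon)$-code: $\gamma<\epsilon$. With $\bar g(\boldsymbol z)=\frac1n\sum_tg(z_t)$, $\theta_i=\Pr[\bar g(\boldsymbol Z)<B\mid\boldsymbol X=\boldsymbol u(i)]$, $\theta=\frac1M\sum_i\theta_i$; $(n,M,\epsilon,B,\delta)$-code: $(n,M,\epsilon)$-code with $\theta<\delta$. Types: $P_{\boldsymbol u(i)}(x^{(\ell)})=\frac1n\#\{t:u_t(i)=x^{(\ell)}\}$, $P_{\mathscr C}=\frac1M\sum_iP_{\boldsymbol u(i)}$. For each $\ell$, $\mathcal E_\ell=\mathcal D_{i^\star,t^\star}$ where $(i^\star,t^\star)$ minimizes $\int_{\mathcal D_{i,t}}f_{Y|X}(y|x^{(\ell)})dy$ over $\{1,\dots,M\}\times\{1,\dots,n\}$. The code is homogeneous if $P_{\boldsymbol u(i)}=P_{\mathscr C}$ for every $i$, and $\mathcal D_{i,t}=\mathcal E_\ell$ whenever $u_t(i)=x^{(\ell)}$. $H$ denotes entropy with natural logarithm. *)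

theory Defs
  imports "HOL-Probability.Probability"
begin

definition chan_pdf :: "real \<Rightarrow> complex \<Rightarrow> complex \<Rightarrow> real" where
  "chan_pdf s2 x y = exp (- ((cmod (y - x))^2) / s2) / (pi * s2)"

definition vec_pdf :: "real \<Rightarrow> nat \<Rightarrow> (nat \<Rightarrow> complex) \<Rightarrow> (nat \<Rightarrow> complex) \<Rightarrow> real" where
  "vec_pdf s2 n u y = (\<Prod>t<n. chan_pdf s2 (u t) (y t))"

definition out_meas :: "nat \<Rightarrow> (nat \<Rightarrow> complex) measure" where
  "out_meas n = PiM {..<n} (\<lambda>_. (lborel :: complex measure))"

text \<open>Codewords u i (i < M), components u i t (t < n); decoding sets D i t (product form).\<close>
definition err_prob :: "real \<Rightarrow> nat \<Rightarrow> (nat \<Rightarrow> nat \<Rightarrow> complex) \<Rightarrow> (nat \<Rightarrow> nat \<Rightarrow> complex set) \<Rightarrow> nat \<Rightarrow> real" where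
  "err_prob s2 n u D i = 1 - (LINT y : PiE {..<n} (D i) | out_meas n. vec_pdf s2 n (u i) y)"

definition avg_err :: "real \<Rightarrow> nat \<Rightarrow> nat \<Rightarrow> (nat \<Rightarrow> nat \<Rightarrow> complex) \<Rightarrow> (nat \<Rightarrow> nat \<Rightarrow> complex set) \<Rightarrow> real" where
  "avg_err s2 n M u D = (\<Sum>i<M. err_prob s2 n u D i) / real M"

definition gbar :: "(complex \<Rightarrow> ennreal) \<Rightarrow> nat \<Rightarrow> (nat \<Rightarrow> complex) \<Rightarrow> ennreal" where
  "gbar g n z = (\<Sum>t<n. g (z t)) / of_nat n"

definition fail_prob :: "real \<Rightarrow> nat \<Rightarrow> (complex \<Rightarrow> ennreal) \<Rightarrow> real \<Rightarrow> (nat \<Rightarrow> nat \<Rightarrow> complex) \<Rightarrow> nat \<Rightarrow> real" where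
  "fail_prob s2 n g B u i =
     measure (density (out_meas n) (\<lambda>z. ennreal (vec_pdf s2 n (u i) z)))
       {z \<in> space (out_meas n). enn2ereal (gbar g n z) < ereal B}"

definition avg_fail :: "real \<Rightarrow> nat \<Rightarrow> nat \<Rightarrow> (complex \<Rightarrow> ennreal) \<Rightarrow> real \<Rightarrow> (nat \<Rightarrow> nat \<Rightarrow> complex) \<Rightarrow> real" where
  "avg_fail s2 n M g B u = (\<Sum>i<M. fail_prob s2 n g B u i) / real M"

definition is_code :: "real \<Rightarrow> nat \<Rightarrow> (nat \<Rightarrow> complex) \<Rightarrow> nat \<Rightarrow> nat \<Rightarrow> (nat \<Rightarrow> nat \<Rightarrow> complex) \<Rightarrow> (nat \<Rightarrow> nat \<Rightarrow> complex set) \<Rightarrow> bool" where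
  "is_code P L x n M u D \<longleftrightarrow>
     (\<forall>i<M. \<forall>t<n. u i t \<in> x ` {1..L} \<and> cmod (u i t) \<le> P) \<and>
     (\<forall>i<M. \<forall>t<n. D i t \<in> sets (borel :: complex measure)) \<and>
     (\<forall>i<M. \<forall>j<M. i \<noteq> j \<longrightarrow> PiE {..<n} (D i) \<inter> PiE {..<n} (D j) = {}) \<and>
     M \<le> 2 ^ (n * nat \<lfloor>log 2 (real L)\<rfloor>)"

definition is_code_eps where
  "is_code_eps s2 P L x n M u D \<epsilon> \<longleftrightarrow> is_code P L x n M u D \<and> avg_err s2 n M u D < \<epsilon>"

definition is_code_full where
  "is_code_full s2 P L x n M u D \<epsilon> g B \<delta> \<longleftrightarrow>
     is_code_eps s2 P L x n M u D \<epsilon> \<and> avg_fail s2 n M g B u < \<delta>"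

definition cw_type :: "nat \<Rightarrow> (nat \<Rightarrow> nat \<Rightarrow> complex) \<Rightarrow> nat \<Rightarrow> complex \<Rightarrow> real" where
  "cw_type n u i a = real (card {t. t < n \<and> u i t = a}) / real n"

definition code_type :: "nat \<Rightarrow> nat \<Rightarrow> (nat \<Rightarrow> nat \<Rightarrow> complex) \<Rightarrow> complex \<Rightarrow> real" where
  "code_type n M u a = (\<Sum>i<M. cw_type n u i a) / real M"

definition set_prob :: "real \<Rightarrow> complex \<Rightarrow> complex set \<Rightarrow> real" where
  "set_prob s2 a A = (LINT y : A | lborel. chan_pdf s2 a y)"

definition is_E_family where
  "is_E_family s2 L x n M D E \<longleftrightarrow>
     (\<forall>l\<in>{1..L}. \<exists>i0<M. \<exists>t0<n. E l = D i0 t0 \<and>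
        (\<forall>i<M. \<forall>t<n. set_prob s2 (x l) (D i0 t0) \<le> set_prob s2 (x l) (D i t)))"

definition homogeneous where
  "homogeneous L x n M u D E \<longleftrightarrow>
     (\<forall>i<M. \<forall>l\<in>{1..L}. cw_type n u i (x l) = code_type n M u (x l)) \<and>
     (\<forall>i<M. \<forall>t<n. \<forall>l\<in>{1..L}. u i t = x l \<longrightarrow> D i t = E l)"

definition entropy_nat :: "nat \<Rightarrow> (nat \<Rightarrow> real) \<Rightarrow> real" where
  "entropy_nat L Q = - (\<Sum>l=1..L. if Q l = 0 then 0 else Q l * ln (Q l))"

end

theory Submission imports Defs begin

lemma enn2real_prod': "enn2real (\<Prod>i\<in>A. f i) = (\<Prod>i\<in>A. enn2real (f i))"
  by (induction A rule: infinite_finite_induct) (auto simp: enn2real_mult)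

lemma chan_pdf_nonneg: "s2 > 0 \<Longrightarrow> chan_pdf s2 a y \<ge> 0"
  unfolding chan_pdf_def by simp

lemma chan_pdf_meas[measurable]: "chan_pdf s2 a \<in> borel_measurable borel"
  unfolding chan_pdf_def by measurable

lemma set_prob_nonneg: "s2 > 0 \<Longrightarrow> set_prob s2 a A \<ge> 0"
  unfolding set_prob_def set_lebesgue_integral_def
  by (intro integral_nonneg_AE) (auto simp: chan_pdf_nonneg)

lemma succ_prod:
  assumes s2: "s2 > 0" and D: "\<And>t. t < n \<Longrightarrow> A t \<in> sets (borel :: complex measure)"
  shows "(LINT y : PiE {..<n} A | out_meas n. vec_pdf s2 n v y) = (\<Prod>t<n. set_prob s2 (v t) (A t))"
proof -
  interpret product_sigma_finite "\<lambda>_. (lborel :: complex measure)" by standard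
  define h where "h t y = indicator (A t) y * chan_pdf s2 (v t) y" for t y
  have hm: "h t \<in> borel_measurable borel" if "t < n" for t
    unfolding h_def using D[OF that] by measurable
  have hnn: "h t y \<ge> 0" for t y unfolding h_def using chan_pdf_nonneg[OF s2] by simp
  have eq: "indicator (PiE {..<n} A) y *\<^sub>R vec_pdf s2 n v y = (\<Prod>t<n. h t (y t))"
    if "y \<in> space (out_meas n)" for y
  proof -
    have ext: "y \<in> extensional {..<n}" using that by (simp add: out_meas_def space_PiM PiE_def)
    have "indicator (PiE {..<n} A) y = (\<Prod>t<n. indicator (A t) (y t) :: real)"
      using ext by (auto simp: indicator_def PiE_def Pi_def)
    then show ?thesis unfolding h_def vec_pdf_def by (simp add: prod.distrib)
  qed
  have "(LINT y : PiE {..<n} A | out_meas n. vec_pdf s2 n v y) = integral\<^sup>L (out_meas n) (\<lambda>y. \<Prod>t<n. h t (y t))"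
    unfolding set_lebesgue_integral_def by (rule Bochner_Integration.integral_cong[OF refl eq])
  also have "\<dots> = enn2real (\<integral>\<^sup>+ y. ennreal (\<Prod>t<n. h t (y t)) \<partial>out_meas n)"
    apply (rule integral_eq_nn_integral)
    unfolding out_meas_def using hm by (auto simp: hnn prod_nonneg)
  also have "(\<integral>\<^sup>+ y. ennreal (\<Prod>t<n. h t (y t)) \<partial>out_meas n) = (\<integral>\<^sup>+ y. (\<Prod>t<n. ennreal (h t (y t))) \<partial>out_meas n)"
    by (simp add: prod_ennreal hnn)
  also have "\<dots> = (\<Prod>t<n. integral\<^sup>N lborel (\<lambda>y. ennreal (h t y)))"
    unfolding out_meas_def using hm by (intro product_nn_integral_prod) auto
  also have "enn2real \<dots> = (\<Prod>t<n. enn2real (integral\<^sup>N lborel (\<lambda>y. ennreal (h t y))))"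
    by (rule enn2real_prod')
  also have "\<dots> = (\<Prod>t<n. set_prob s2 (v t) (A t))"
  proof (rule prod.cong[OF refl])
    fix t assume "t \<in> {..<n}"
    then show "enn2real (integral\<^sup>N lborel (\<lambda>y. ennreal (h t y))) = set_prob s2 (v t) (A t)"
      unfolding set_prob_def set_lebesgue_integral_def
      using hm[of t] by (subst integral_eq_nn_integral) (auto simp: h_def[abs_def] hnn[unfolded h_def])
  qed
  finally show ?thesis .
qed

lemma power_exp_form:
  fixes p S Q :: real and k n :: nat
  assumes "p \<ge> 0" "S > 0" "Q = p / S" "real k = real n * Q"
  shows "p ^ k = exp (real n * (if Q = 0 then 0 else Q * ln Q) + real n * Q * ln S)"
proof (cases "Q = 0")
  case True
  then have "k = 0" using assms by simp
  then show ?thesis using True by simp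
next
  case False
  then have p: "p > 0" using assms by auto
  have "p ^ k = exp (real k * ln p)" using p by (simp add: exp_of_nat_mult)
  also have "ln p = ln Q + ln S" using p assms by (simp add: ln_div)
  finally show ?thesis using False assms p by (simp add: algebra_simps)
qed

theorem corollary3:
  fixes n M L :: nat and x :: "nat \<Rightarrow> complex" and s2 P \<epsilon> B \<delta> :: real
    and g :: "complex \<Rightarrow> ennreal"
    and u :: "nat \<Rightarrow> nat \<Rightarrow> complex" and D :: "nat \<Rightarrow> nat \<Rightarrow> complex set"
    and E :: "nat \<Rightarrow> complex set"
  assumes "n \<ge> 1" and "M \<ge> 1" and "L \<ge> 1" and "inj_on x {1..L}"
    and "s2 > 0" and "P > 0"
    and "g \<in> borel_measurable borel"
    and "\<epsilon> > 0"
    and "is_code_full s2 P L x n M u D \<epsilon> g B \<delta>"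
    and "is_E_family s2 L x n M D E"
    and "homogeneous L x n M u D E"
    and "(\<Sum>j=1..L. set_prob s2 (x j) (E j)) > 0"
    and "\<forall>l\<in>{1..L}. code_type n M u (x l) =
           set_prob s2 (x l) (E l) / (\<Sum>j=1..L. set_prob s2 (x j) (E j))"
  shows "\<epsilon> \<ge> 1 - exp (- real n * entropy_nat L
            (\<lambda>l. set_prob s2 (x l) (E l) / (\<Sum>j=1..L. set_prob s2 (x j) (E j)))
          + real n * ln (\<Sum>j=1..L. set_prob s2 (x j) (E j)))"
proof -
  note n = assms(1) and M = assms(2) and inj = assms(4) and s2 = assms(5)
  define p where "p l = set_prob s2 (x l) (E l)" for l
  define S where "S = (\<Sum>j=1..L. p j)"
  define Q where "Q l = p l / S" for l
  have S: "S > 0" using assms(12) by (simp add: S_def p_def)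
  have pnn: "p l \<ge> 0" for l unfolding p_def using set_prob_nonneg[OF s2] .
  have code: "is_code P L x n M u D" and err: "avg_err s2 n M u D < \<epsilon>"
    using assms(9) by (auto simp: is_code_full_def is_code_eps_def)
  have hom1: "\<And>i l. i < M \<Longrightarrow> l \<in> {1..L} \<Longrightarrow> cw_type n u i (x l) = code_type n M u (x l)"
   and hom2: "\<And>i t l. i < M \<Longrightarrow> t < n \<Longrightarrow> l \<in> {1..L} \<Longrightarrow> u i t = x l \<Longrightarrow> D i t = E l"
    using assms(11) unfolding homogeneous_def by auto
  have uin: "\<And>i t. i < M \<Longrightarrow> t < n \<Longrightarrow> u i t \<in> x ` {1..L}"
   and Dm: "\<And>i t. i < M \<Longrightarrow> t < n \<Longrightarrow> D i t \<in> sets borel"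
    using code unfolding is_code_def by auto
  define X where "X = exp (- real n * entropy_nat L Q + real n * ln S)"
  have succ: "(LINT y : PiE {..<n} (D i) | out_meas n. vec_pdf s2 n (u i) y) = X" if i: "i < M" for i
  proof -
    define lt where "lt t = inv_into {1..L} x (u i t)" for t
    have lt: "lt t \<in> {1..L}" "x (lt t) = u i t" if "t < n" for t
      using uin[OF i that] unfolding lt_def using inv_into_into[of "u i t" x "{1..L}"] by (simp_all add: f_inv_into_f)
    have fib: "{t \<in> {..<n}. lt t = l} = {t. t < n \<and> u i t = x l}" if "l \<in> {1..L}" for l
    proof -
      have "lt t = l \<longleftrightarrow> u i t = x l" if "t < n" for t
        using lt[OF that] inj \<open>l \<in> {1..L}\<close> by (metis inj_on_eq_iff)
      then show ?thesis by auto
    qed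
    have "(LINT y : PiE {..<n} (D i) | out_meas n. vec_pdf s2 n (u i) y)
        = (\<Prod>t<n. set_prob s2 (u i t) (D i t))"
      using succ_prod[OF s2 Dm[OF i]] by simp
    also have "\<dots> = (\<Prod>t<n. p (lt t))"
      by (rule prod.cong[OF refl]) (auto simp: p_def lt hom2[OF i _ lt(1) lt(2)[symmetric]] dest: lt(2)[symmetric])
    also have "\<dots> = (\<Prod>l\<in>{1..L}. \<Prod>t\<in>{t \<in> {..<n}. lt t = l}. p (lt t))"
      using lt(1) by (intro prod.group[symmetric]) (auto simp del: atLeastAtMost_iff)
    also have "\<dots> = (\<Prod>l\<in>{1..L}. p l ^ card {t. t < n \<and> u i t = x l})"
    proof (rule prod.cong[OF refl])
      fix l assume l: "l \<in> {1..L}"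
      have "(\<Prod>t\<in>{t \<in> {..<n}. lt t = l}. p (lt t)) = (\<Prod>t\<in>{t \<in> {..<n}. lt t = l}. p l)"
        by (rule prod.cong) auto
      also have "\<dots> = p l ^ card {t \<in> {..<n}. lt t = l}" by simp
      finally show "(\<Prod>t\<in>{t \<in> {..<n}. lt t = l}. p (lt t)) = p l ^ card {t. t < n \<and> u i t = x l}"
        by (simp only: fib[OF l])
    qed
    also have "\<dots> = (\<Prod>l\<in>{1..L}. exp (real n * (if Q l = 0 then 0 else Q l * ln (Q l)) + real n * Q l * ln S))"
    proof (rule prod.cong[OF refl])
      fix l assume l: "l \<in> {1..L}"
      have "real (card {t. t < n \<and> u i t = x l}) = real n * cw_type n u i (x l)"
        using n by (simp add: cw_type_def)
      also have "\<dots> = real n * Q l" using hom1[OF i l] assms(13) l by (simp add: Q_def p_def S_def)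
      finally show "p l ^ card {t. t < n \<and> u i t = x l} = exp (real n * (if Q l = 0 then 0 else Q l * ln (Q l)) + real n * Q l * ln S)"
        by (intro power_exp_form[OF pnn S]) (simp_all add: Q_def)
    qed
    also have "\<dots> = exp (\<Sum>l\<in>{1..L}. real n * (if Q l = 0 then 0 else Q l * ln (Q l)) + real n * Q l * ln S)"
      by (simp add: exp_sum)
    also have "(\<Sum>l\<in>{1..L}. real n * (if Q l = 0 then 0 else Q l * ln (Q l)) + real n * Q l * ln S)
        = - real n * entropy_nat L Q + real n * ln S * (\<Sum>l\<in>{1..L}. Q l)"
      by (simp add: entropy_nat_def sum.distrib sum_distrib_left sum_negf algebra_simps)
    also have "(\<Sum>l\<in>{1..L}. Q l) = 1" using S by (simp add: Q_def S_def sum_divide_distrib[symmetric])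
    finally show ?thesis by (simp add: X_def)
  qed
  have "avg_err s2 n M u D = 1 - X"
    using M by (simp add: avg_err_def err_prob_def succ)
  then have "\<epsilon> \<ge> 1 - X" using err by simp
  moreover have "Q = (\<lambda>l. set_prob s2 (x l) (E l) / (\<Sum>j=1..L. set_prob s2 (x j) (E j)))"
    by (simp add: Q_def p_def S_def fun_eq_iff)
  ultimately show ?thesis by (simp add: X_def S_def p_def)
qed
end
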